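(* Let $N_1, N_2$ be positive integers. Let $Z\sim \operatorname{Beta}(N_1 + 1, N_2)$, $B_1 \sim \operatorname{Beta}(N_1, 1)$ and $B_2 \sim \operatorname{Beta}(1, N_2)$ be independent random variables. Then $B_1 (1 - B_2) Z + B_2 \sim \operatorname{Beta}(N_1 + 1, N_2)$. Consequently, $\operatorname{Beta}(N_1+1, N_2)$ is a stationary distribution of the Markov chain on $[0,1]$ defined by $Z^{(t)} = B_1^{(t)} (1 - B_2^{(t)}) Z^{(t-1)} + B_2^{(t)}$, where $B_1^{(t)} \sim \operatorname{Beta}(N_1,1)$ and $B_2^{(t)}\sim\operatorname{Beta}(1,N_2)$, $t=1,2,\dots$, are all mutually independent and independent of $Z^{(0)}$.
   Context: $\operatorname{Beta}(a,b)$ denotes the Beta distribution on $[0,1]$ with density proportional to $x^{a-1}(1-x)^{b-1}$. *)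

theory Defs
  imports "HOL-Probability.Probability"
begin

definition beta_density :: "real \<Rightarrow> real \<Rightarrow> real \<Rightarrow> real" where
  "beta_density a b x =
     (if 0 < x \<and> x < 1 then x powr (a - 1) * (1 - x) powr (b - 1) / Beta a b else 0)"

text \<open>Index type for the family of random variables driving the Markov chain.\<close>
datatype chain_idx = Init | Step1 nat | Step2 nat

primrec beta_chain ::
  "('a \<Rightarrow> real) \<Rightarrow> (nat \<Rightarrow> 'a \<Rightarrow> real) \<Rightarrow> (nat \<Rightarrow> 'a \<Rightarrow> real) \<Rightarrow> nat \<Rightarrow> 'a \<Rightarrow> real" where
  "beta_chain Z0 B1 B2 0 = Z0"
| "beta_chain Z0 B1 B2 (Suc t) =
     (\<lambda>\<omega>. B1 (Suc t) \<omega> * (1 - B2 (Suc t) \<omega>) * beta_chain Z0 B1 B2 t \<omega> + B2 (Suc t) \<omega>)"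

end

theory Submission
  imports Defs
begin

lemma beta_density_meas[measurable]: "beta_density a b \<in> borel_measurable borel"
  unfolding beta_density_def by measurable
lemma Beta_pos: "0 < a \<Longrightarrow> 0 < b \<Longrightarrow> 0 < Beta (a::real) b"
  by (simp add: Beta_def Gamma_real_pos)
lemma Beta_1: "0 < a \<Longrightarrow> Beta (a::real) 1 = 1 / a"
proof -
  assume a: "0 < a"
  hence "a \<notin> \<int>\<^sub>\<le>\<^sub>0" by (auto elim!: nonpos_Ints_cases)
  hence "Gamma (a+1) = a * Gamma a" by (rule Gamma_plus1)
  moreover have "Gamma a \<noteq> 0" using Gamma_real_pos[OF a] by linarith
  ultimately show ?thesis using a by (simp add: Beta_def)
qed

lemma beta_density_refl: "beta_density a b (1 - x) = beta_density b a x"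
  unfolding beta_density_def by (auto simp: Beta_commute)

lemma distributed_refl:
  assumes "prob_space M" and D: "distributed M lborel X (\<lambda>x. ennreal (beta_density a b x))"
  shows "distributed M lborel (\<lambda>\<omega>. 1 - X \<omega>) (\<lambda>x. ennreal (beta_density b a x))"
proof -
  have X[measurable]: "X \<in> borel_measurable M" and Dd: "distr M lborel X = density lborel (\<lambda>x. ennreal (beta_density a b x))"
    using D by (auto simp: distributed_def)
  have "distr M lborel (\<lambda>\<omega>. 1 - X \<omega>) = distr (distr M lborel X) lborel (\<lambda>x. 1 - x)"
    by (subst distr_distr) (auto simp: comp_def)
  also have "\<dots> = density lborel (\<lambda>x. ennreal (beta_density b a x))"
  proof (rule measure_eqI)
    fix A assume A: "A \<in> sets (distr (distr M lborel X) lborel (\<lambda>x. 1 - x))"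
    hence [measurable]: "A \<in> sets borel" by simp
    have pre: "(\<lambda>x::real. 1 - x) -` A \<in> sets borel"
    proof -
      have "(\<lambda>x::real. 1 - x) -` A = {x \<in> space borel. 1 - x \<in> A}" by auto
      also have "\<dots> \<in> sets borel" by measurable
      finally show ?thesis .
    qed
    have "emeasure (distr (distr M lborel X) lborel (\<lambda>x. 1 - x)) A
       = emeasure (density lborel (\<lambda>x. ennreal (beta_density a b x))) ((\<lambda>x. 1 - x) -` A)"
      unfolding Dd using pre by (subst emeasure_distr) auto
    also have "\<dots> = (\<integral>\<^sup>+x. ennreal (beta_density a b x) * indicator A (1 - x) \<partial>lborel)"
      using pre by (subst emeasure_density) (auto intro!: nn_integral_cong split: split_indicator)
    also have "\<dots> = (\<integral>\<^sup>+x. ennreal (beta_density a b (1 + (-1) * x)) * indicator A (1 - (1 + (-1) * x)) \<partial>lborel)"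
      by (subst nn_integral_real_affine[where c="-1" and t=1]) auto
    also have "\<dots> = (\<integral>\<^sup>+x. ennreal (beta_density b a x) * indicator A x \<partial>lborel)"
      using beta_density_refl[of a b] by simp
    also have "\<dots> = emeasure (density lborel (\<lambda>x. ennreal (beta_density b a x))) A"
      by (subst emeasure_density) auto
    finally show "emeasure (distr (distr M lborel X) lborel (\<lambda>x. 1 - x)) A = emeasure (density lborel (\<lambda>x. ennreal (beta_density b a x))) A" .
  qed simp
  finally show ?thesis by (auto simp: distributed_def)
qed

lemma powr_nat_minus1: "0 < x \<Longrightarrow> 1 \<le> n \<Longrightarrow> x powr (real n - 1) = x ^ (n - 1)"
proof -
  assume x: "0 < x" and n: "1 \<le> n"
  have e: "real n - 1 = real (n - 1)" using n by simp
  have "x powr (real n - 1) = x powr real (n - 1)" by (simp only: e)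
  also have "\<dots> = x ^ (n - 1)" using x by (rule powr_realpow)
  finally show ?thesis .
qed

lemma Beta_shift: "0 < a \<Longrightarrow> 0 < c \<Longrightarrow> c * Beta (a + 1) c = a * Beta a (c + 1::real)"
proof -
  assume a: "0 < a" and c: "0 < c"
  have na: "a \<notin> \<int>\<^sub>\<le>\<^sub>0" and nc: "c \<notin> \<int>\<^sub>\<le>\<^sub>0" using a c by (auto elim!: nonpos_Ints_cases)
  have 1: "(a + c) * Beta (a + 1) c = a * Beta a c" by (rule Beta_plus1_left[OF na])
  have 2: "(a + c) * Beta a (c + 1) = c * Beta a c" by (rule Beta_plus1_right[OF nc])
  have 3: "(a + c) * (c * Beta (a + 1) c) = c * (a * Beta a c)"
    by (subst 1[symmetric]) (simp add: algebra_simps)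
  have 4: "(a + c) * (a * Beta a (c + 1)) = a * (c * Beta a c)"
    by (subst 2[symmetric]) (simp add: algebra_simps)
  have "(a + c) * (c * Beta (a + 1) c) = (a + c) * (a * Beta a (c + 1))"
    unfolding 3 4 by (simp add: algebra_simps)
  moreover have "a + c \<noteq> 0" using a c by simp
  ultimately show ?thesis by simp
qed

lemma inner_integral:
  fixes a c :: nat and s :: real
  assumes a: "1 \<le> a" and c: "1 \<le> c"
  shows "(\<integral>\<^sup>+v. ennreal (beta_density (real a + 1) (real c) v) * ennreal (1 / \<bar>v\<bar>) *
            ennreal (beta_density (real a) 1 (s / v)) \<partial>lborel)
         = ennreal (beta_density (real a) (real c + 1) s)"
proof (cases "0 < s \<and> s < 1")
  case False
  have z: "\<And>v. ennreal (beta_density (real a + 1) (real c) v) * ennreal (1 / \<bar>v\<bar>) *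
            ennreal (beta_density (real a) 1 (s / v)) = 0"
  proof -
    fix v
    show "ennreal (beta_density (real a + 1) (real c) v) * ennreal (1 / \<bar>v\<bar>) *
            ennreal (beta_density (real a) 1 (s / v)) = 0"
    proof (cases "0 < v \<and> v < 1")
      case True
      have "\<not> (0 < s / v \<and> s / v < 1)"
      proof
        assume "0 < s / v \<and> s / v < 1"
        hence "0 < s" "s < v" using True by (auto simp: field_simps zero_less_divide_iff)
        thus False using False True by auto
      qed
      hence "beta_density (real a) 1 (s / v) = 0" unfolding beta_density_def by (rule if_not_P)
      thus ?thesis by simp
    next
      case False
      hence "beta_density (real a + 1) (real c) v = 0" unfolding beta_density_def by (rule if_not_P)
      thus ?thesis by simp
    qed
  qed
  moreover have "beta_density (real a) (real c + 1) s = 0" unfolding beta_density_def using False by (rule if_not_P)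
  moreover have "(\<integral>\<^sup>+v. ennreal (beta_density (real a + 1) (real c) v) * ennreal (1 / \<bar>v\<bar>) *
            ennreal (beta_density (real a) 1 (s / v)) \<partial>lborel) = (\<integral>\<^sup>+v. 0 \<partial>lborel)"
    by (simp add: z)
  ultimately show ?thesis by simp
next
  case True
  define C where "C = real a * s ^ (a - 1) / Beta (real a + 1) (real c)"
  have Bp: "0 < Beta (real a + 1) (real c)" using a c by (intro Beta_pos) auto
  have Cp: "0 \<le> C" unfolding C_def using Bp True by simp
  have pt: "ennreal (beta_density (real a + 1) (real c) v) * ennreal (1 / \<bar>v\<bar>) *
            ennreal (beta_density (real a) 1 (s / v)) = ennreal (C * (1 - v) ^ (c - 1)) * indicator {s<..<1} v" for v
  proof (cases "s < v \<and> v < 1")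
    case True2: True
    have v: "0 < v" "v < 1" using True True2 by auto
    have sv: "0 < s / v" "s / v < 1" using True True2 v by (auto simp: field_simps)
    have e1: "beta_density (real a + 1) (real c) v = v ^ a * (1 - v) ^ (c - 1) / Beta (real a + 1) (real c)"
      using v c by (simp add: beta_density_def powr_nat_minus1 powr_realpow)
    have e2: "beta_density (real a) 1 (s / v) = real a * (s / v) ^ (a - 1)"
      using sv a v True2 by (simp add: beta_density_def powr_nat_minus1 Beta_1)
    have "beta_density (real a + 1) (real c) v * (1 / \<bar>v\<bar>) * beta_density (real a) 1 (s / v) = C * (1 - v) ^ (c - 1)"
    proof -
      have va: "v ^ a = v * v ^ (a - 1)" using a by (metis One_nat_def Suc_pred' not_one_le_zero power_Suc zero_less_iff_neq_zero)
      have "v ^ (a - 1) \<noteq> 0" using v by simp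
      thus ?thesis unfolding e1 e2 C_def va using v by (simp add: power_divide field_simps)
    qed
    moreover have n1: "0 \<le> beta_density (real a + 1) (real c) v" "0 \<le> 1 / \<bar>v\<bar>"
      "0 \<le> beta_density (real a) 1 (s / v)"
      using e1 e2 v sv Bp by auto
    moreover have "ennreal (beta_density (real a + 1) (real c) v) * ennreal (1 / \<bar>v\<bar>) *
            ennreal (beta_density (real a) 1 (s / v)) = ennreal (beta_density (real a + 1) (real c) v * (1 / \<bar>v\<bar>) * beta_density (real a) 1 (s / v))"
      using n1 by (metis ennreal_mult mult_nonneg_nonneg)
    ultimately show ?thesis using True2 by (simp del: ennreal_mult' ennreal_mult'')
  next
    case False2: False
    show ?thesis
    proof (cases "0 < v \<and> v < 1")
      case True3: True
      have "\<not> (0 < s / v \<and> s / v < 1)" using True3 False2 by (auto simp: field_simps)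
      hence "beta_density (real a) 1 (s / v) = 0" unfolding beta_density_def by (rule if_not_P)
      thus ?thesis using False2 by simp
    next
      case False
      hence "beta_density (real a + 1) (real c) v = 0" unfolding beta_density_def by (rule if_not_P)
      thus ?thesis using False2 by (simp add: indicator_def)
    qed
  qed
  have der: "((\<lambda>v. - C * (1 - v) ^ c / real c) has_vector_derivative C * (1 - v) ^ (c - 1)) (at v within {s..1})" for v
    using c by (auto intro!: derivative_eq_intros simp: has_real_derivative_iff_has_vector_derivative[symmetric] field_simps)
  have "((\<lambda>v. C * (1 - v) ^ (c - 1)) has_integral (- C * (1 - 1) ^ c / real c) - (- C * (1 - s) ^ c / real c)) {s..1}"
    using True by (intro fundamental_theorem_of_calculus der) auto
  hence "((\<lambda>v. C * (1 - v) ^ (c - 1)) has_integral C * (1 - s) ^ c / real c) {s<..<1}"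
    using c by (simp add: has_integral_open_interval[of _ _ s 1, simplified] zero_power)
  hence "(\<integral>\<^sup>+v. ennreal (C * (1 - v) ^ (c - 1)) * indicator {s<..<1} v \<partial>lborel) = ennreal (C * (1 - s) ^ c / real c)"
    using True Cp by (intro nn_integral_has_integral_lebesgue') auto
  moreover have "C * (1 - s) ^ c / real c = beta_density (real a) (real c + 1) s"
  proof -
    have Bs: "real c * Beta (real a + 1) (real c) = real a * Beta (real a) (real c + 1)"
      using a c by (intro Beta_shift) auto
    have Bp2: "0 < Beta (real a) (real c + 1)" using a c by (intro Beta_pos) auto
    have "beta_density (real a) (real c + 1) s = s ^ (a - 1) * (1 - s) ^ c / Beta (real a) (real c + 1)"
      using True a by (simp add: beta_density_def powr_nat_minus1 powr_realpow)
    have "C * (1 - s) ^ c / real c = real a * (s ^ (a - 1) * (1 - s) ^ c) / (real c * Beta (real a + 1) (real c))"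
      unfolding C_def by (simp add: mult.commute mult.left_commute)
    also have "\<dots> = real a * (s ^ (a - 1) * (1 - s) ^ c) / (real a * Beta (real a) (real c + 1))"
      using Bs by simp
    also have "\<dots> = s ^ (a - 1) * (1 - s) ^ c / Beta (real a) (real c + 1)"
      using a by simp
    finally show ?thesis using \<open>beta_density (real a) (real c + 1) s = _\<close> by simp
  qed
  moreover have "(\<integral>\<^sup>+v. ennreal (beta_density (real a + 1) (real c) v) * ennreal (1 / \<bar>v\<bar>) *
            ennreal (beta_density (real a) 1 (s / v)) \<partial>lborel) =
     (\<integral>\<^sup>+v. ennreal (C * (1 - v) ^ (c - 1)) * indicator {s<..<1} v \<partial>lborel)"
    by (simp only: pt)
  ultimately show ?thesis by simp
qed

lemma indep_var_lborel_borel: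
  assumes "prob_space M"
  shows "prob_space.indep_var M lborel U lborel V = prob_space.indep_var M borel U (borel :: real measure) V"
proof -
  interpret prob_space M by fact
  show ?thesis by (simp add: indep_var_eq)
qed

lemma distributed_prod:
  fixes a c :: nat
  assumes M: "prob_space M" and a: "1 \<le> a" and c: "1 \<le> c"
  and DU: "distributed M lborel U (\<lambda>x. ennreal (beta_density (real a) 1 x))"
  and DV: "distributed M lborel V (\<lambda>x. ennreal (beta_density (real a + 1) (real c) x))"
  and ind: "prob_space.indep_var M borel U borel V"
  shows "distributed M lborel (\<lambda>\<omega>. U \<omega> * V \<omega>) (\<lambda>x. ennreal (beta_density (real a) (real c + 1) x))"
proof -
  interpret prob_space M by fact
  let ?fU = "\<lambda>x. ennreal (beta_density (real a) 1 x)"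
  let ?fV = "\<lambda>x. ennreal (beta_density (real a + 1) (real c) x)"
  let ?h = "\<lambda>x. ennreal (beta_density (real a) (real c + 1) x)"
  have ind': "indep_var lborel U lborel V" using ind indep_var_lborel_borel[OF M, of U V] by simp
  have J: "distributed M (lborel \<Otimes>\<^sub>M lborel) (\<lambda>x. (U x, V x)) (\<lambda>(x, y). ?fU x * ?fV y)"
    by (rule distributed_joint_indep[OF _ _ DU DV ind']) (auto intro: lborel.sigma_finite_measure_axioms)
  have U[measurable]: "U \<in> borel_measurable M" and V[measurable]: "V \<in> borel_measurable M"
    using DU DV by (auto simp: distributed_def)
  have Jd: "distr M (lborel \<Otimes>\<^sub>M lborel) (\<lambda>x. (U x, V x)) = density (lborel \<Otimes>\<^sub>M lborel) (\<lambda>(x, y). ?fU x * ?fV y)"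
    using J by (simp add: distributed_def)
  have "distr M lborel (\<lambda>\<omega>. U \<omega> * V \<omega>) = distr (distr M (lborel \<Otimes>\<^sub>M lborel) (\<lambda>x. (U x, V x))) lborel (\<lambda>p. fst p * snd p)"
    by (subst distr_distr) (auto simp: comp_def)
  also have "\<dots> = density lborel ?h"
  proof (rule measure_eqI)
    fix A assume "A \<in> sets (distr (distr M (lborel \<Otimes>\<^sub>M lborel) (\<lambda>x. (U x, V x))) lborel (\<lambda>p. fst p * snd p))"
    hence A[measurable]: "A \<in> sets borel" by simp
    have pre: "(\<lambda>p::real\<times>real. fst p * snd p) -` A \<inter> space (lborel \<Otimes>\<^sub>M lborel) \<in> sets (lborel \<Otimes>\<^sub>M lborel)"
      by measurable
    have "emeasure (distr (distr M (lborel \<Otimes>\<^sub>M lborel) (\<lambda>x. (U x, V x))) lborel (\<lambda>p. fst p * snd p)) A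
      = emeasure (density (lborel \<Otimes>\<^sub>M lborel) (\<lambda>(x, y). ?fU x * ?fV y)) ((\<lambda>p. fst p * snd p) -` A \<inter> space (lborel \<Otimes>\<^sub>M lborel))"
      unfolding Jd by (subst emeasure_distr) auto
    also have "\<dots> = (\<integral>\<^sup>+p. ?fU (fst p) * ?fV (snd p) * indicator A (fst p * snd p) \<partial>(lborel \<Otimes>\<^sub>M lborel))"
      using pre by (subst emeasure_density) (auto intro!: nn_integral_cong split: split_indicator)
    also have "\<dots> = (\<integral>\<^sup>+v. (\<integral>\<^sup>+u. ?fU u * ?fV v * indicator A (u * v) \<partial>lborel) \<partial>lborel)"
      by (subst lborel_pair.nn_integral_snd[symmetric]) (auto, measurable)
    also have "\<dots> = (\<integral>\<^sup>+v. (\<integral>\<^sup>+s. ?fV v * ennreal (1 / \<bar>v\<bar>) * ?fU (s / v) * indicator A s \<partial>lborel) \<partial>lborel)"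
    proof (rule nn_integral_cong)
      fix v :: real
      show "(\<integral>\<^sup>+u. ?fU u * ?fV v * indicator A (u * v) \<partial>lborel) =
            (\<integral>\<^sup>+s. ?fV v * ennreal (1 / \<bar>v\<bar>) * ?fU (s / v) * indicator A s \<partial>lborel)"
      proof (cases "v = 0")
        case True
        thus ?thesis by (simp add: beta_density_def)
      next
        case False
        have "(\<integral>\<^sup>+u. ?fU u * ?fV v * indicator A (u * v) \<partial>lborel) =
          ennreal \<bar>1 / v\<bar> * (\<integral>\<^sup>+s. ?fU (0 + (1 / v) * s) * ?fV v * indicator A ((0 + (1 / v) * s) * v) \<partial>lborel)"
          using False by (subst nn_integral_real_affine[where c="1 / v" and t=0]) auto
        also have "\<dots> = (\<integral>\<^sup>+s. ennreal \<bar>1 / v\<bar> * (?fU (s / v) * ?fV v * indicator A s) \<partial>lborel)"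
          using False by (subst nn_integral_cmult) auto
        also have "\<dots> = (\<integral>\<^sup>+s. ?fV v * ennreal (1 / \<bar>v\<bar>) * ?fU (s / v) * indicator A s \<partial>lborel)"
          by (intro nn_integral_cong) (simp add: mult_ac)
        finally show ?thesis .
      qed
    qed
    also have "\<dots> = (\<integral>\<^sup>+s. (\<integral>\<^sup>+v. ?fV v * ennreal (1 / \<bar>v\<bar>) * ?fU (s / v) * indicator A s \<partial>lborel) \<partial>lborel)"
      by (rule lborel_pair.Fubini') measurable
    also have "\<dots> = (\<integral>\<^sup>+s. (\<integral>\<^sup>+v. ?fV v * ennreal (1 / \<bar>v\<bar>) * ?fU (s / v) \<partial>lborel) * indicator A s \<partial>lborel)"
      by (intro nn_integral_cong nn_integral_multc) measurable
    also have "\<dots> = (\<integral>\<^sup>+s. ?h s * indicator A s \<partial>lborel)"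
      using inner_integral[OF a c] by simp
    also have "\<dots> = emeasure (density lborel ?h) A"
      by (subst emeasure_density) auto
    finally show "emeasure (distr (distr M (lborel \<Otimes>\<^sub>M lborel) (\<lambda>x. (U x, V x))) lborel (\<lambda>p. fst p * snd p)) A = emeasure (density lborel ?h) A" .
  qed simp
  finally show ?thesis using U V by (auto simp: distributed_def)
qed

lemma beta_step:
  assumes M: "prob_space M" and n1: "N1 \<ge> 1" and n2: "N2 \<ge> 1"
  and DZ: "distributed M lborel Z (\<lambda>x. ennreal (beta_density (real N1 + 1) (real N2) x))"
  and DB1: "distributed M lborel B1 (\<lambda>x. ennreal (beta_density (real N1) 1 x))"
  and DB2: "distributed M lborel B2 (\<lambda>x. ennreal (beta_density 1 (real N2) x))"
  and i1: "prob_space.indep_var M borel B1 borel Z"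
  and i2: "prob_space.indep_var M borel B2 borel (\<lambda>\<omega>. B1 \<omega> * Z \<omega>)"
  shows "distributed M lborel (\<lambda>\<omega>. B1 \<omega> * (1 - B2 \<omega>) * Z \<omega> + B2 \<omega>)
           (\<lambda>x. ennreal (beta_density (real N1 + 1) (real N2) x))"
proof -
  interpret prob_space M by fact
  have W: "distributed M lborel (\<lambda>\<omega>. B1 \<omega> * Z \<omega>) (\<lambda>x. ennreal (beta_density (real N1) (real N2 + 1) x))"
    by (rule distributed_prod[OF M n1 n2 DB1 DZ i1])
  have W': "distributed M lborel (\<lambda>\<omega>. 1 - B1 \<omega> * Z \<omega>) (\<lambda>x. ennreal (beta_density (real N2 + 1) (real N1) x))"
    by (rule distributed_refl[OF M W])
  have B2': "distributed M lborel (\<lambda>\<omega>. 1 - B2 \<omega>) (\<lambda>x. ennreal (beta_density (real N2) 1 x))"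
    by (rule distributed_refl[OF M DB2])
  have i3: "indep_var borel ((\<lambda>x. 1 - x) \<circ> B2) borel ((\<lambda>x. 1 - x) \<circ> (\<lambda>\<omega>. B1 \<omega> * Z \<omega>))"
    by (rule indep_var_compose[OF i2]) auto
  have P: "distributed M lborel (\<lambda>\<omega>. (1 - B2 \<omega>) * (1 - B1 \<omega> * Z \<omega>)) (\<lambda>x. ennreal (beta_density (real N2) (real N1 + 1) x))"
    by (rule distributed_prod[OF M n2 n1 B2' W']) (use i3 in \<open>simp add: comp_def\<close>)
  have "distributed M lborel (\<lambda>\<omega>. 1 - (1 - B2 \<omega>) * (1 - B1 \<omega> * Z \<omega>)) (\<lambda>x. ennreal (beta_density (real N1 + 1) (real N2) x))"
    by (rule distributed_refl[OF M P])
  moreover have "(\<lambda>\<omega>. 1 - (1 - B2 \<omega>) * (1 - B1 \<omega> * Z \<omega>)) = (\<lambda>\<omega>. B1 \<omega> * (1 - B2 \<omega>) * Z \<omega> + B2 \<omega>)"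
    by (rule ext) (simp add: algebra_simps)
  ultimately show ?thesis by simp
qed

lemma indep_from_family:
  assumes M: "prob_space M" and ind: "prob_space.indep_vars M (\<lambda>_. borel) X I"
  and AB: "A \<inter> B = {}" "A \<subseteq> I" "B \<subseteq> I"
  and f: "f \<in> measurable (PiM A (\<lambda>_. borel)) (borel :: real measure)"
  and g: "g \<in> measurable (PiM B (\<lambda>_. borel)) (borel :: real measure)"
  and F: "\<And>\<omega>. F \<omega> = f (restrict (\<lambda>i. X i \<omega>) A)"
  and G: "\<And>\<omega>. G \<omega> = g (restrict (\<lambda>i. X i \<omega>) B)"
  shows "prob_space.indep_var M borel F borel G"
proof -
  interpret prob_space M by fact
  have "indep_var borel (f \<circ> (\<lambda>\<omega>. restrict (\<lambda>i. X i \<omega>) A)) borel (g \<circ> (\<lambda>\<omega>. restrict (\<lambda>i. X i \<omega>) B))"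
    by (rule indep_var_compose[OF indep_var_restrict[OF ind AB] f g])
  moreover have "f \<circ> (\<lambda>\<omega>. restrict (\<lambda>i. X i \<omega>) A) = F" "g \<circ> (\<lambda>\<omega>. restrict (\<lambda>i. X i \<omega>) B) = G"
    using F G by (auto simp: fun_eq_iff)
  ultimately show ?thesis by simp
qed

primrec chainG :: "nat \<Rightarrow> (chain_idx \<Rightarrow> real) \<Rightarrow> real" where
  "chainG 0 h = h Init"
| "chainG (Suc t) h = h (Step1 (Suc t)) * (1 - h (Step2 (Suc t))) * chainG t h + h (Step2 (Suc t))"

definition chainK :: "nat \<Rightarrow> chain_idx set" where
  "chainK t = {Init} \<union> Step1 ` {1..t} \<union> Step2 ` {1..t}"

lemma chainK_Suc: "chainK t \<subseteq> chainK (Suc t)" "Step1 (Suc t) \<in> chainK (Suc t)" "Step2 (Suc t) \<in> chainK (Suc t)"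
  "Init \<in> chainK t"
  unfolding chainK_def by auto

lemma chainG_meas: "chainK t \<subseteq> K \<Longrightarrow> chainG t \<in> measurable (PiM K (\<lambda>_. borel)) borel"
proof (induction t)
  case 0
  hence "Init \<in> K" using chainK_Suc(4)[of 0] by blast
  thus ?case by simp
next
  case (Suc t)
  hence IH: "chainG t \<in> measurable (PiM K (\<lambda>_. borel)) borel" using chainK_Suc(1) by blast
  have s1: "Step1 (Suc t) \<in> K" and s2: "Step2 (Suc t) \<in> K" using Suc.prems chainK_Suc by blast+
  show ?case using IH s1 s2 by simp measurable
qed

lemma chainG_eval:
  "chainK t \<subseteq> K \<Longrightarrow> chainG t (restrict (\<lambda>i. (case i of Init \<Rightarrow> Z0 | Step1 t \<Rightarrow> B1 t | Step2 t \<Rightarrow> B2 t) \<omega>) K)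
     = beta_chain Z0 B1 B2 t \<omega>"
proof (induction t)
  case 0
  hence "Init \<in> K" using chainK_Suc(4)[of 0] by blast
  thus ?case by simp
next
  case (Suc t)
  have s1: "Step1 (Suc t) \<in> K" and s2: "Step2 (Suc t) \<in> K" using Suc.prems chainK_Suc by blast+
  have "chainK t \<subseteq> K" using Suc.prems chainK_Suc(1) by blast
  thus ?case using Suc.IH s1 s2 by simp
qed

lemma chainK_not: "Step1 (Suc t) \<notin> chainK t" "Step2 (Suc t) \<notin> chainK t" "Step2 (Suc t) \<noteq> Step1 (Suc t)"
  unfolding chainK_def by auto

lemma chainK_sub: "chainK t \<subseteq> {Init} \<union> Step1 ` {1..} \<union> Step2 ` {1..}"
  unfolding chainK_def by auto

theorem mainTheorem1:
  fixes N1 N2 :: nat and M :: "'a measure"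
  assumes "prob_space M" and "N1 \<ge> 1" and "N2 \<ge> 1"
  shows
   "(\<forall>Z B1 B2 :: 'a \<Rightarrow> real.
       distributed M lborel Z (\<lambda>x. ennreal (beta_density (real N1 + 1) (real N2) x)) \<and>
       distributed M lborel B1 (\<lambda>x. ennreal (beta_density (real N1) 1 x)) \<and>
       distributed M lborel B2 (\<lambda>x. ennreal (beta_density 1 (real N2) x)) \<and>
       prob_space.indep_vars M (\<lambda>_. borel)
         (\<lambda>i::nat. if i = 0 then Z else if i = 1 then B1 else B2) {0, 1, 2}
     \<longrightarrow> distributed M lborel (\<lambda>\<omega>. B1 \<omega> * (1 - B2 \<omega>) * Z \<omega> + B2 \<omega>)
           (\<lambda>x. ennreal (beta_density (real N1 + 1) (real N2) x)))
    \<and>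
    (\<forall>(Z0 :: 'a \<Rightarrow> real) (B1 :: nat \<Rightarrow> 'a \<Rightarrow> real) (B2 :: nat \<Rightarrow> 'a \<Rightarrow> real).
       distributed M lborel Z0 (\<lambda>x. ennreal (beta_density (real N1 + 1) (real N2) x)) \<and>
       (\<forall>t\<ge>1. distributed M lborel (B1 t) (\<lambda>x. ennreal (beta_density (real N1) 1 x))) \<and>
       (\<forall>t\<ge>1. distributed M lborel (B2 t) (\<lambda>x. ennreal (beta_density 1 (real N2) x))) \<and>
       prob_space.indep_vars M (\<lambda>_. borel)
         (\<lambda>i. case i of Init \<Rightarrow> Z0 | Step1 t \<Rightarrow> B1 t | Step2 t \<Rightarrow> B2 t)
         ({Init} \<union> Step1 ` {1..} \<union> Step2 ` {1..})
     \<longrightarrow> (\<forall>t. distributed M lborel (beta_chain Z0 B1 B2 t)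
               (\<lambda>x. ennreal (beta_density (real N1 + 1) (real N2) x))))"
proof -
  interpret prob_space M by fact
  have M: "prob_space M" by fact
  have n1: "N1 \<ge> 1" and n2: "N2 \<ge> 1" by fact+
  have part1: "distributed M lborel (\<lambda>\<omega>. B1 \<omega> * (1 - B2 \<omega>) * Z \<omega> + B2 \<omega>)
           (\<lambda>x. ennreal (beta_density (real N1 + 1) (real N2) x))"
    if DZ: "distributed M lborel Z (\<lambda>x. ennreal (beta_density (real N1 + 1) (real N2) x))"
    and DB1: "distributed M lborel B1 (\<lambda>x. ennreal (beta_density (real N1) 1 x))"
    and DB2: "distributed M lborel B2 (\<lambda>x. ennreal (beta_density 1 (real N2) x))"
    and ind: "indep_vars (\<lambda>_. borel) (\<lambda>i::nat. if i = 0 then Z else if i = 1 then B1 else B2) {0, 1, 2}"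
    for Z B1 B2 :: "'a \<Rightarrow> real"
  proof -
    have i1: "indep_var borel B1 borel Z"
      by (rule indep_from_family[OF M ind, where A="{1}" and B="{0}" and f="\<lambda>h. h 1" and g="\<lambda>h. h 0"]) auto
    have i2: "indep_var borel B2 borel (\<lambda>\<omega>. B1 \<omega> * Z \<omega>)"
      by (rule indep_from_family[OF M ind, where A="{2}" and B="{0,1}" and f="\<lambda>h. h 2" and g="\<lambda>h. h 1 * h 0"])
         (auto, measurable)
    show ?thesis by (rule beta_step[OF M n1 n2 DZ DB1 DB2 i1 i2])
  qed
  have part2: "distributed M lborel (beta_chain Z0 B1 B2 t)
               (\<lambda>x. ennreal (beta_density (real N1 + 1) (real N2) x))"
    if DZ: "distributed M lborel Z0 (\<lambda>x. ennreal (beta_density (real N1 + 1) (real N2) x))"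
    and DB1: "\<forall>t\<ge>1. distributed M lborel (B1 t) (\<lambda>x. ennreal (beta_density (real N1) 1 x))"
    and DB2: "\<forall>t\<ge>1. distributed M lborel (B2 t) (\<lambda>x. ennreal (beta_density 1 (real N2) x))"
    and ind: "indep_vars (\<lambda>_. borel)
         (\<lambda>i. case i of Init \<Rightarrow> Z0 | Step1 t \<Rightarrow> B1 t | Step2 t \<Rightarrow> B2 t)
         ({Init} \<union> Step1 ` {1..} \<union> Step2 ` {1..})"
    for Z0 :: "'a \<Rightarrow> real" and B1 B2 :: "nat \<Rightarrow> 'a \<Rightarrow> real" and t
  proof (induction t)
    case 0
    thus ?case using DZ by simp
  next
    case (Suc t)
    let ?X = "\<lambda>i. case i of Init \<Rightarrow> Z0 | Step1 t \<Rightarrow> B1 t | Step2 t \<Rightarrow> B2 t"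
    have sub: "chainK t \<subseteq> {Init} \<union> Step1 ` {1..} \<union> Step2 ` {1..}" by (rule chainK_sub)
    have S1: "Step1 (Suc t) \<in> {Init} \<union> Step1 ` {1..} \<union> Step2 ` {1..}" by auto
    have S2: "Step2 (Suc t) \<in> {Init} \<union> Step1 ` {1..} \<union> Step2 ` {1..}" by auto
    have i1: "indep_var borel (B1 (Suc t)) borel (beta_chain Z0 B1 B2 t)"
    proof (rule indep_from_family[OF M ind, where A="{Step1 (Suc t)}" and B="chainK t"
          and f="\<lambda>h. h (Step1 (Suc t))" and g="chainG t"])
      show "chainG t \<in> measurable (PiM (chainK t) (\<lambda>_. borel)) borel" by (rule chainG_meas) simp
      show "beta_chain Z0 B1 B2 t \<omega> = chainG t (restrict (\<lambda>i. ?X i \<omega>) (chainK t))" for \<omega>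
        by (rule chainG_eval[symmetric]) simp
    qed (use sub S1 chainK_not in auto)
    have i2: "indep_var borel (B2 (Suc t)) borel (\<lambda>\<omega>. B1 (Suc t) \<omega> * beta_chain Z0 B1 B2 t \<omega>)"
    proof (rule indep_from_family[OF M ind, where A="{Step2 (Suc t)}" and B="insert (Step1 (Suc t)) (chainK t)"
          and f="\<lambda>h. h (Step2 (Suc t))" and g="\<lambda>h. h (Step1 (Suc t)) * chainG t h"])
      have "chainG t \<in> measurable (PiM (insert (Step1 (Suc t)) (chainK t)) (\<lambda>_. borel)) borel"
        by (rule chainG_meas) auto
      thus "(\<lambda>h. h (Step1 (Suc t)) * chainG t h) \<in> measurable (PiM (insert (Step1 (Suc t)) (chainK t)) (\<lambda>_. borel)) borel"
        by measurable
      show "B1 (Suc t) \<omega> * beta_chain Z0 B1 B2 t \<omega> =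
          (\<lambda>h. h (Step1 (Suc t)) * chainG t h) (restrict (\<lambda>i. ?X i \<omega>) (insert (Step1 (Suc t)) (chainK t)))" for \<omega>
      proof -
        have "chainK t \<subseteq> insert (Step1 (Suc t)) (chainK t)" by blast
        from chainG_eval[OF this, of Z0 B1 B2 \<omega>] show ?thesis by simp
      qed
    qed (use sub S1 S2 chainK_not in auto)
    have "distributed M lborel (\<lambda>\<omega>. B1 (Suc t) \<omega> * (1 - B2 (Suc t) \<omega>) * beta_chain Z0 B1 B2 t \<omega> + B2 (Suc t) \<omega>)
           (\<lambda>x. ennreal (beta_density (real N1 + 1) (real N2) x))"
      by (rule beta_step[OF M n1 n2 Suc.IH _ _ i1 i2]) (use DB1 DB2 in auto)
    thus ?case by simp
  qed
  show ?thesis using part1 part2 by blast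
qed

end
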